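(* Let $mG^{(0)}$ be a finite canonical misinformation game, let $\mathcal{AD}^{\infty}(\{mG^{(0)}\})$ be the Stable Set of the Adaptation Procedure on $mG^{(0)}$, and let $\mathcal{T}$ be its terminal set. Then $$\mathcal{AD}^{\infty}(\{mG^{(0)}\}) = \mathcal{AD}^{*}(\mathcal{T}).$$
   Context: A normal-form game is $G=\langle N,S,P\rangle$ with a finite set of players $N$, finite pure strategy sets $S_i$ ($i\in N$), set of pure strategy profiles (positions) $S=\times_{i\in N}S_i$, and payoffs $P=(P_i)_{i\in N}$ with $P_i:S\to\mathbb{R}$. A misinformation game is a tuple $mG=\langle G^0,G^1,\dots,G^{|N|}\rangle$ of normal-form games, $G^0$ (the actual game) having $|N|$ players; $G^i$ is the subjective game of player $i$. It is canonical if every $G^i$ differs from $G^0$ only in its payoffs (so $G^i=\langle N,S,P^i\rangle$ for all $i$) and in every $G^i$ all players have the same number of pure strategies. A misinformed strategy profile $\sigma=(\sigma_1,\dots,\sigma_{|N|})$ is a natural misinformed equilibrium (nme) if for each $i$, $\sigma_i$ is player $i$'s component of some (mixed) Nash equilibrium of $G^i$; $NME(mG)$ denotes the set of these. For a profile $\sigma$, $\chi(\sigma)=\mathrm{supp}(\sigma_1)\times\dots\times\mathrm{supp}(\sigma_{|N|})\subseteq S$. For a position $\vec v\in S$, the $\vec v$-update $mG_{\vec v}$ is the misinformation game $\langle G^0,G'^1,\dots,G'^{|N|}\rangle$ where $G'^i=\langle N,S,P'^i\rangle$ with $P'^i(\vec v)=P^0(\vec v)$ (the whole payoff vector) and $P'^i(\vec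 u)=P^i(\vec u)$ for $\vec u\neq\vec v$. For a set $M$ of misinformation games, $\mathcal{AD}(M)=\{mG_{\vec u}: mG\in M,\ \sigma\in NME(mG),\ \vec u\in\chi(\sigma)\}$; $\mathcal{AD}^{(0)}(M)=M$ and $\mathcal{AD}^{(t+1)}(M)=\mathcal{AD}^{(t)}(\mathcal{AD}(M))$. The procedure terminates at the smallest $t\ge0$ with $\mathcal{AD}^{(t+1)}(M)=\mathcal{AD}^{(t)}(M)$; this $t$ is the length $\mathfrak{L}$, and $\mathcal{AD}^{\infty}(M)=\mathcal{AD}^{(\mathfrak{L})}(M)$ is the Stable Set. $\mathcal{AD}^{*}(M)=\bigcup_{t\ge0}\mathcal{AD}^{(t)}(M)$. The terminal set of the Adaptation Procedure on $mG^{(0)}$ is $\mathcal{T}=\{mG\in\mathcal{AD}^*(\{mG^{(0)}\}) : mG\in\mathcal{AD}(\{mG\})\}$. *)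

theory Defs
  imports Complex_Main "HOL-Library.FuncSet"
begin

text \<open>Players are the elements of a finite type 'p (the set N = UNIV).
  Player j's pure strategy set is St j.
  A canonical misinformation game is a pair (P0, Ps): P0 is the payoff of the
  actual game G^0 and Ps i is the payoff of the subjective game G^i of player i;
  all games share the strategy sets St (canonicity).\<close>

type_synonym ('p, 's) payoff = "('p \<Rightarrow> 's) \<Rightarrow> 'p \<Rightarrow> real"
type_synonym ('p, 's) mgame = "('p, 's) payoff \<times> ('p \<Rightarrow> ('p, 's) payoff)"

definition positions :: "('p \<Rightarrow> 's set) \<Rightarrow> ('p \<Rightarrow> 's) set" where
  "positions St = PiE UNIV St"

definition mixed_strategy :: "'s set \<Rightarrow> ('s \<Rightarrow> real) \<Rightarrow> bool" where
  "mixed_strategy A \<tau> \<longleftrightarrow> (\<forall>s. 0 \<le> \<tau> s) \<and> (\<forall>s. s \<notin> A \<longrightarrow> \<tau> s = 0) \<and> sum \<tau> A = 1"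

definition mixed_profile :: "('p \<Rightarrow> 's set) \<Rightarrow> ('p \<Rightarrow> 's \<Rightarrow> real) \<Rightarrow> bool" where
  "mixed_profile St \<sigma> \<longleftrightarrow> (\<forall>i. mixed_strategy (St i) (\<sigma> i))"

definition exp_payoff :: "('p::finite \<Rightarrow> 's set) \<Rightarrow> ('p, 's) payoff \<Rightarrow> ('p \<Rightarrow> 's \<Rightarrow> real) \<Rightarrow> 'p \<Rightarrow> real" where
  "exp_payoff St P \<sigma> i = (\<Sum>v\<in>positions St. (\<Prod>j\<in>UNIV. \<sigma> j (v j)) * P v i)"

definition nash_eq :: "('p::finite \<Rightarrow> 's set) \<Rightarrow> ('p, 's) payoff \<Rightarrow> ('p \<Rightarrow> 's \<Rightarrow> real) \<Rightarrow> bool" where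
  "nash_eq St P \<sigma> \<longleftrightarrow> mixed_profile St \<sigma> \<and>
     (\<forall>i \<tau>. mixed_strategy (St i) \<tau> \<longrightarrow> exp_payoff St P (\<sigma>(i := \<tau>)) i \<le> exp_payoff St P \<sigma> i)"

definition nme :: "('p::finite \<Rightarrow> 's set) \<Rightarrow> ('p, 's) mgame \<Rightarrow> ('p \<Rightarrow> 's \<Rightarrow> real) \<Rightarrow> bool" where
  "nme St mG \<sigma> \<longleftrightarrow> (\<forall>i. \<exists>\<tau>. nash_eq St (snd mG i) \<tau> \<and> \<sigma> i = \<tau> i)"

definition chi :: "('p \<Rightarrow> 's \<Rightarrow> real) \<Rightarrow> ('p \<Rightarrow> 's) set" where
  "chi \<sigma> = PiE UNIV (\<lambda>i. {s. \<sigma> i s \<noteq> 0})"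

definition mg_update :: "('p, 's) mgame \<Rightarrow> ('p \<Rightarrow> 's) \<Rightarrow> ('p, 's) mgame" where
  "mg_update mG v = (fst mG, \<lambda>i. (snd mG i)(v := fst mG v))"

definition AD :: "('p::finite \<Rightarrow> 's set) \<Rightarrow> ('p, 's) mgame set \<Rightarrow> ('p, 's) mgame set" where
  "AD St M = {mg_update mG u | mG \<sigma> u. mG \<in> M \<and> nme St mG \<sigma> \<and> u \<in> chi \<sigma>}"

text \<open>AD^(t)(M) = (AD ^^ t) M, since AD^(t+1)(M) = AD^(t)(AD(M)).\<close>
definition AD_iter :: "('p::finite \<Rightarrow> 's set) \<Rightarrow> nat \<Rightarrow> ('p, 's) mgame set \<Rightarrow> ('p, 's) mgame set" where
  "AD_iter St t M = (AD St ^^ t) M"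

definition AD_length :: "('p::finite \<Rightarrow> 's set) \<Rightarrow> ('p, 's) mgame set \<Rightarrow> nat" where
  "AD_length St M = (LEAST t. AD_iter St (Suc t) M = AD_iter St t M)"

definition AD_inf :: "('p::finite \<Rightarrow> 's set) \<Rightarrow> ('p, 's) mgame set \<Rightarrow> ('p, 's) mgame set" where
  "AD_inf St M = AD_iter St (AD_length St M) M"

definition AD_star :: "('p::finite \<Rightarrow> 's set) \<Rightarrow> ('p, 's) mgame set \<Rightarrow> ('p, 's) mgame set" where
  "AD_star St M = (\<Union>t. AD_iter St t M)"

definition terminal_set :: "('p::finite \<Rightarrow> 's set) \<Rightarrow> ('p, 's) mgame \<Rightarrow> ('p, 's) mgame set" where
  "terminal_set St mG0 = {mG \<in> AD_star St {mG0}. mG \<in> AD St {mG}}"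

end

theory Submission
  imports Defs
begin

definition agr :: "('p \<Rightarrow> 's set) \<Rightarrow> ('p, 's) mgame \<Rightarrow> ('p \<Rightarrow> 's) set" where
  "agr St mG = {v \<in> positions St. \<forall>i. snd mG i v = fst mG v}"

fun walk :: "('p::finite \<Rightarrow> 's set) \<Rightarrow> nat \<Rightarrow> ('p, 's) mgame \<Rightarrow> ('p, 's) mgame \<Rightarrow> bool" where
  "walk St 0 x y = (x = y)"
| "walk St (Suc n) x y = (\<exists>z. walk St n x z \<and> y \<in> AD St {z})"

lemma walk_Suc': "walk St (Suc n) x y = (\<exists>z. walk St n x z \<and> y \<in> AD St {z})"
  by auto

lemma AD_iter_walk: "(AD St ^^ n) M = {y. \<exists>x\<in>M. walk St n x y}"
proof (induction n)
  case 0 then show ?case by auto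
next
  case (Suc n)
  have "(AD St ^^ Suc n) M = AD St ((AD St ^^ n) M)" by simp
  also have "\<dots> = {y. \<exists>x\<in>M. walk St (Suc n) x y}"
    unfolding Suc walk_Suc' unfolding AD_def by blast
  finally show ?case .
qed

lemma walk_add: "walk St a x z \<Longrightarrow> walk St b z y \<Longrightarrow> walk St (a + b) x y"
  by (induction b arbitrary: y) (auto simp: walk_Suc')

lemma walk_loop: "z \<in> AD St {z} \<Longrightarrow> walk St k z z"
  by (induction k) (auto simp only: walk_Suc' walk.simps(1))

lemma step_pos:
  assumes "y \<in> AD St {z}"
  shows "\<exists>u\<in>positions St. y = mg_update z u"
proof -
  from assms obtain \<sigma> u where n: "nme St z \<sigma>" and u: "u \<in> chi \<sigma>" and y: "y = mg_update z u"
    unfolding AD_def by blast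
  have "u \<in> positions St"
    unfolding positions_def
  proof (rule PiE_I)
    fix i
    from n obtain \<tau> where "nash_eq St (snd z i) \<tau>" "\<sigma> i = \<tau> i" unfolding nme_def by blast
    hence "mixed_strategy (St i) (\<sigma> i)" unfolding nash_eq_def mixed_profile_def by auto
    moreover have "\<sigma> i (u i) \<noteq> 0" using u unfolding chi_def by (auto simp: PiE_iff)
    ultimately show "u i \<in> St i" unfolding mixed_strategy_def by auto
  next
    fix i assume "i \<notin> (UNIV :: 'a set)" then show "u i = undefined" by simp
  qed
  then show ?thesis using y by blast
qed

lemma agr_update: "u \<in> positions St \<Longrightarrow> agr St (mg_update z u) = insert u (agr St z)"
  unfolding agr_def mg_update_def by auto

lemma update_idem: assumes "u \<in> agr St z" shows "mg_update z u = z"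
proof -
  have "(\<lambda>i. (snd z i)(u := fst z u)) = snd z"
    using assms unfolding agr_def by (intro ext fun_upd_idem) auto
  then show ?thesis unfolding mg_update_def by simp
qed

lemma step_mono:
  assumes "y \<in> AD St {z}" "finite (positions St)"
  shows "agr St z \<subseteq> agr St y \<and> (y \<noteq> z \<longrightarrow> card (agr St z) < card (agr St y))"
proof -
  obtain u where u: "u \<in> positions St" "y = mg_update z u" using step_pos[OF assms(1)] by blast
  have fin: "finite (agr St z)" using assms(2) unfolding agr_def by auto
  show ?thesis
  proof (cases "u \<in> agr St z")
    case True then have "y = z" using u update_idem by metis
    then show ?thesis by simp
  next
    case False then show ?thesis using u agr_update[OF u(1)] fin by auto
  qed
qed

lemma agr_card: "finite (positions St) \<Longrightarrow> card (agr St z) \<le> card (positions St)"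
  unfolding agr_def by (rule card_mono) auto

lemma walk_short:
  assumes "walk St n x y" "finite (positions St)"
  shows "\<exists>m. walk St m x y \<and> m + card (agr St x) \<le> card (agr St y) \<and> agr St x \<subseteq> agr St y"
  using assms(1)
proof (induction n arbitrary: y)
  case 0 then show ?case by auto
next
  case (Suc n)
  then obtain z where z: "walk St n x z" "y \<in> AD St {z}" by (auto simp: walk_Suc')
  from Suc.IH[OF z(1)] obtain m where m: "walk St m x z" "m + card (agr St x) \<le> card (agr St z)"
     "agr St x \<subseteq> agr St z" by blast
  have s: "agr St z \<subseteq> agr St y \<and> (y \<noteq> z \<longrightarrow> card (agr St z) < card (agr St y))"
    using step_mono[OF z(2) assms(2)] .
  show ?case
  proof (cases "y = z")
    case True then show ?thesis using m by blast
  next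
    case False
    have "walk St (Suc m) x y" using m z unfolding walk_Suc' by blast
    then show ?thesis using m s False by (intro exI[of _ "Suc m"]) auto
  qed
qed

lemma walk_long:
  assumes "walk St n x y" "finite (positions St)"
  shows "(\<exists>z a b. walk St a x z \<and> z \<in> AD St {z} \<and> walk St b z y) \<or> n + card (agr St x) \<le> card (agr St y)"
  using assms(1)
proof (induction n arbitrary: y)
  case 0 then show ?case by auto
next
  case (Suc n)
  then obtain z where z: "walk St n x z" "y \<in> AD St {z}" by (auto simp: walk_Suc')
  have s: "agr St z \<subseteq> agr St y \<and> (y \<noteq> z \<longrightarrow> card (agr St z) < card (agr St y))"
    using step_mono[OF z(2) assms(2)] .
  from Suc.IH[OF z(1)] show ?case
  proof
    assume "\<exists>w a b. walk St a x w \<and> w \<in> AD St {w} \<and> walk St b w z"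
    then obtain w a b where "walk St a x w" "w \<in> AD St {w}" "walk St b w z" by blast
    then show ?case using z(2) by (intro disjI1 exI[of _ w] exI[of _ a] exI[of _ "Suc b"]) (unfold walk_Suc', blast)
  next
    assume h: "n + card (agr St x) \<le> card (agr St z)"
    show ?case
    proof (cases "y = z")
      case True then show ?thesis using z by (intro disjI1 exI[of _ z] exI[of _ n] exI[of _ 0]) auto
    next
      case False then show ?thesis using s h by auto
    qed
  qed
qed

theorem theorem1:
  fixes St :: "'p::finite \<Rightarrow> 's set"
    and mG0 :: "('p, 's) mgame"
  assumes "\<And>j. finite (St j)"
    and "\<And>j. St j \<noteq> {}"
  shows "AD_inf St {mG0} = AD_star St (terminal_set St mG0)"
proof -
  have fin: "finite (positions St)" unfolding positions_def using assms(1) by (intro finite_PiE) auto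
  define N where "N = card (positions St)"
  define S where "S = {y. \<exists>z a b. walk St a mG0 z \<and> z \<in> AD St {z} \<and> walk St b z y}"
  have key: "AD_iter St t {mG0} = S" if t: "t > N + N" for t
  proof
    show "AD_iter St t {mG0} \<subseteq> S"
    proof
      fix y assume "y \<in> AD_iter St t {mG0}"
      then have w: "walk St t mG0 y" unfolding AD_iter_def AD_iter_walk by auto
      have "card (agr St y) \<le> N" using agr_card[OF fin] N_def by auto
      then show "y \<in> S" using walk_long[OF w fin] t unfolding S_def by auto
    qed
  next
    show "S \<subseteq> AD_iter St t {mG0}"
    proof
      fix y assume "y \<in> S"
      then obtain z a b where h: "walk St a mG0 z" "z \<in> AD St {z}" "walk St b z y" unfolding S_def by blast
      obtain a' where a': "walk St a' mG0 z" "a' \<le> N"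
        using walk_short[OF h(1) fin] agr_card[OF fin, of z] N_def by fastforce
      obtain b' where b': "walk St b' z y" "b' \<le> N"
        using walk_short[OF h(3) fin] agr_card[OF fin, of y] N_def by fastforce
      have "walk St (a' + (t - a' - b')) mG0 z" using walk_add[OF a'(1) walk_loop[OF h(2)]] .
      from walk_add[OF this b'(1)] have w: "walk St (a' + (t - a' - b') + b') mG0 y" .
      have "a' + (t - a' - b') + b' = t" using a' b' t by linarith
      with w have "walk St t mG0 y" by simp
      then show "y \<in> AD_iter St t {mG0}" unfolding AD_iter_def AD_iter_walk by auto
    qed
  qed
  define K where "K = Suc (N + N)"
  have fixK: "AD_iter St (Suc K) {mG0} = AD_iter St K {mG0}"
    using key[of K] key[of "Suc K"] K_def by simp
  define L where "L = AD_length St {mG0}"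
  have L: "AD_iter St (Suc L) {mG0} = AD_iter St L {mG0}" and LK: "L \<le> K"
    unfolding L_def AD_length_def
    by (rule LeastI[of "\<lambda>t. AD_iter St (Suc t) {mG0} = AD_iter St t {mG0}", OF fixK],
        rule Least_le[of "\<lambda>t. AD_iter St (Suc t) {mG0} = AD_iter St t {mG0}", OF fixK])
  have stab: "AD_iter St (L + m) {mG0} = AD_iter St L {mG0}" for m
  proof (induction m)
    case 0 then show ?case by simp
  next
    case (Suc m)
    have "AD_iter St (L + Suc m) {mG0} = AD St (AD_iter St (L + m) {mG0})"
      unfolding AD_iter_def by simp
    also have "\<dots> = AD St (AD_iter St L {mG0})" using Suc by simp
    also have "\<dots> = AD_iter St (Suc L) {mG0}" unfolding AD_iter_def by simp
    finally show ?case using L by simp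
  qed
  have "AD_inf St {mG0} = AD_iter St K {mG0}"
    unfolding AD_inf_def L_def[symmetric] using stab[of "K - L"] LK by simp
  also have "\<dots> = S" using key K_def by simp
  also have "S = AD_star St (terminal_set St mG0)"
    unfolding S_def AD_star_def terminal_set_def AD_iter_def AD_iter_walk by blast
  finally show ?thesis .
qed

end
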